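(* Let $\phi:\mathbb{R}\to\mathbb{R}$ be differentiable, $f(z)=A\phi(Bz)$ with $A\in\mathbb{R}^{k_0\times k}$, $B\in\mathbb{R}^{k\times k_0}$, and $x\in\mathbb{R}^{k_0}$ with $\|x\|_2=1$. Run gradient descent on $\mathcal{L}(x,f)=\frac12\|x-f(x)\|_2^2$ from $A^{(0)}=x{a^{(0)}}^T$, $B^{(0)}=b^{(0)}x^T$ ($a^{(0)},b^{(0)}\in\mathbb{R}^k$). If the final weights $A^{(\infty)},B^{(\infty)}$ yield zero training error, then $A^{(\infty)}=xa^T$ and $B^{(\infty)}=bx^T$ for some $a,b\in\mathbb{R}^k$ with $a^T\phi(b)=1$.
   Context: $\phi$ is applied coordinatewise. Gradient descent updates $A\leftarrow A-\gamma\nabla_A\mathcal{L}$, $B\leftarrow B-\gamma\nabla_B\mathcal{L}$; $A^{(\infty)},B^{(\infty)}$ denote the weights at the end of training. *)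

theory Defs
  imports "HOL-Analysis.Analysis"
begin

definition vmap :: "(real \<Rightarrow> real) \<Rightarrow> real ^ 'n \<Rightarrow> real ^ 'n" where
  "vmap \<phi> v = (\<chi> i. \<phi> (v $ i))"

definition outer :: "real ^ 'm \<Rightarrow> real ^ 'n \<Rightarrow> real ^ 'n ^ 'm" where
  "outer u v = (\<chi> i j. u $ i * v $ j)"

definition net :: "(real \<Rightarrow> real) \<Rightarrow> real ^ 'k ^ 'k0 \<Rightarrow> real ^ 'k0 ^ 'k \<Rightarrow> real ^ 'k0 \<Rightarrow> real ^ 'k0" where
  "net \<phi> A B z = A *v vmap \<phi> (B *v z)"

definition loss :: "(real \<Rightarrow> real) \<Rightarrow> real ^ 'k0 \<Rightarrow> real ^ 'k ^ 'k0 \<Rightarrow> real ^ 'k0 ^ 'k \<Rightarrow> real" where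
  "loss \<phi> x A B = (1/2) * (norm (x - net \<phi> A B x))\<^sup>2"

end

theory Submission
  imports Defs
begin

lemma gderiv_unique:
  assumes "GDERIV f X :> D" "GDERIV f X :> D'" shows "D = D'"
proof -
  have "(\<lambda>h. inner h D) = (\<lambda>h. inner h D')"
    using assms unfolding gderiv_def by (rule has_derivative_unique)
  hence "inner (D - D') D = inner (D - D') D'" by metis
  hence "inner (D - D') (D - D') = 0" by (simp add: inner_diff_right)
  thus ?thesis by simp
qed

lemma dir_zero:
  assumes "GDERIV f X :> D" and "\<And>t::real. f (X + t *\<^sub>R H) = f X"
  shows "inner H D = 0"
proof -
  have l: "((\<lambda>t::real. X + t *\<^sub>R H) has_derivative (\<lambda>t. t *\<^sub>R H)) (at 0)"
    by (auto intro!: derivative_eq_intros)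
  have d: "(f has_derivative (\<lambda>h. inner h D)) (at ((\<lambda>t::real. X + t *\<^sub>R H) 0))"
    using assms(1) unfolding gderiv_def by simp
  have "((\<lambda>t. f (X + t *\<^sub>R H)) has_derivative (\<lambda>t. inner (t *\<^sub>R H) D)) (at 0)"
    using has_derivative_compose[OF l d] by (simp add: o_def)
  moreover have "((\<lambda>t::real. f (X + t *\<^sub>R H)) has_derivative (\<lambda>t. 0)) (at 0)"
    using assms(2) by simp
  ultimately have "(\<lambda>t::real. inner (t *\<^sub>R H) D) = (\<lambda>t. 0)" by (rule has_derivative_unique)
  hence "inner (1 *\<^sub>R H) D = 0" by metis
  thus ?thesis by simp
qed

lemma outer_mv: "outer u v *v w = (inner v w) *\<^sub>R u"
  by (simp add: outer_def vec_eq_iff matrix_vector_mult_def inner_vec_def sum_distrib_left mult.commute mult.left_commute)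

lemma outer_mv2: "outer u v *v w = (v \<bullet> w) *\<^sub>R u"
  by (rule outer_mv)

lemma inner_outer: "inner H (outer u v) = inner (H *v v) u"
  by (simp add: outer_def inner_vec_def matrix_vector_mult_def sum_distrib_left sum_distrib_right mult_ac)

lemma outer_diff1: "outer x a - c *\<^sub>R outer x v = outer x (a - c *\<^sub>R v)"
  by (simp add: outer_def vec_eq_iff algebra_simps)
lemma outer_diff2: "outer b x - c *\<^sub>R outer v x = outer (b - c *\<^sub>R v) x"
  by (simp add: outer_def vec_eq_iff algebra_simps)
lemma outer_scale1: "c *\<^sub>R outer x v = outer x (c *\<^sub>R v)"
  by (simp add: outer_def vec_eq_iff algebra_simps)
lemma outer_scale2: "c *\<^sub>R outer v x = outer (c *\<^sub>R v) x"
  by (simp add: outer_def vec_eq_iff algebra_simps)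

lemma mv_left_linear: "bounded_linear (\<lambda>A::real^'n^'m. A *v h)"
proof -
  have "linear (\<lambda>A::real^'n^'m. A *v h)"
    by (rule linearI) (simp_all add: vec_eq_iff matrix_vector_mult_def algebra_simps sum.distrib sum_distrib_left)
  thus ?thesis by (simp add: linear_conv_bounded_linear)
qed

lemma subspace_outer1: "subspace (range (outer (x::real^'m) :: real^'n \<Rightarrow> _))"
  unfolding subspace_def
  apply (intro conjI ballI allI)
    apply (rule image_eqI[of _ _ 0]) apply (simp add: outer_def vec_eq_iff) apply simp
   apply (auto simp: image_iff)
   apply (rule_tac x="xa + xb" in exI) apply (simp add: outer_def vec_eq_iff algebra_simps)
  apply (rule_tac x="c *\<^sub>R xa" in exI) apply (simp add: outer_def vec_eq_iff algebra_simps)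
  done

lemma subspace_outer2: "subspace (range (\<lambda>b::real^'n. outer b (x::real^'m)))"
  unfolding subspace_def
  apply (intro conjI ballI allI)
    apply (rule image_eqI[of _ _ 0]) apply (simp add: outer_def vec_eq_iff) apply simp
   apply (auto simp: image_iff)
   apply (rule_tac x="xa + xb" in exI) apply (simp add: outer_def vec_eq_iff algebra_simps)
  apply (rule_tac x="c *\<^sub>R xa" in exI) apply (simp add: outer_def vec_eq_iff algebra_simps)
  done

lemma gradA_form:
  fixes A :: "real^'k^'k0" and h :: "real^'k"
  shows "GDERIV (\<lambda>A'. (1/2) * (norm (x - A' *v h))\<^sup>2) A :> - outer (x - A *v h) h"
proof -
  interpret bl: bounded_linear "\<lambda>A::real^'k^'k0. A *v h" by (rule mv_left_linear)
  have e: "(\<lambda>A'. (1/2) * (norm (x - A' *v h))\<^sup>2) = (\<lambda>A'. (1/2) * inner (x - A' *v h) (x - A' *v h))"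
    by (simp add: power2_norm_eq_inner)
  have "((\<lambda>A'. (1/2) * inner (x - A' *v h) (x - A' *v h)) has_derivative
        (\<lambda>H. (1/2) * (inner (x - A *v h) (- (H *v h)) + inner (- (H *v h)) (x - A *v h)))) (at A)"
    by (auto intro!: derivative_eq_intros bl.has_derivative)
  moreover have "(\<lambda>H. (1/2) * (inner (x - A *v h) (- (H *v h)) + inner (- (H *v h)) (x - A *v h)))
      = (\<lambda>H. inner H (- outer (x - A *v h) h))"
    by (auto simp: inner_outer inner_commute)
  ultimately show ?thesis unfolding gderiv_def e by simp
qed


theorem proposition3:
  fixes \<phi> :: "real \<Rightarrow> real"
    and x :: "real ^ 'k0::finite"
    and A :: "nat \<Rightarrow> real ^ 'k::finite ^ 'k0"
    and B :: "nat \<Rightarrow> real ^ 'k0 ^ 'k"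
    and gA :: "nat \<Rightarrow> real ^ 'k ^ 'k0"
    and gB :: "nat \<Rightarrow> real ^ 'k0 ^ 'k"
    and a0 b0 :: "real ^ 'k"
    and \<gamma> :: real
    and Ainf :: "real ^ 'k ^ 'k0"
    and Binf :: "real ^ 'k0 ^ 'k"
  assumes phi_diff: "\<And>z. \<phi> differentiable (at z)"
    and x_norm: "norm x = 1"
    and A0: "A 0 = outer x a0"
    and B0: "B 0 = outer b0 x"
    and gradA: "\<And>t. GDERIV (\<lambda>A'. loss \<phi> x A' (B t)) (A t) :> gA t"
    and gradB: "\<And>t. GDERIV (\<lambda>B'. loss \<phi> x (A t) B') (B t) :> gB t"
    and stepA: "\<And>t. A (Suc t) = A t - \<gamma> *\<^sub>R gA t"
    and stepB: "\<And>t. B (Suc t) = B t - \<gamma> *\<^sub>R gB t"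
    and final: "(\<exists>T. Ainf = A T \<and> Binf = B T) \<or> (A \<longlonglongrightarrow> Ainf \<and> B \<longlonglongrightarrow> Binf)"
    and zero_err: "loss \<phi> x Ainf Binf = 0"
  shows "\<exists>a b :: real ^ 'k. Ainf = outer x a \<and> Binf = outer b x \<and> a \<bullet> vmap \<phi> b = 1"
proof -
  have xx: "x \<bullet> x = 1" using x_norm by (simp add: power2_norm_eq_inner[symmetric])
  have lossB: "loss \<phi> x A' B' = (1/2) * (norm (x - A' *v vmap \<phi> (B' *v x)))\<^sup>2" for A' B'
    by (simp add: loss_def net_def)
  have gB_form: "gB t = outer (gB t *v x) x" for t
  proof -
    define Hm where "Hm = gB t - outer (gB t *v x) x"
    have Hx: "Hm *v x = 0"
      by (simp add: Hm_def matrix_vector_mult_diff_rdistrib outer_mv xx)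
    have sc: "(c *\<^sub>R Hm) *v x = c *\<^sub>R (Hm *v x)" for c :: real
      by (simp add: vec_eq_iff matrix_vector_mult_def sum_distrib_left mult.assoc)
    have "inner Hm (gB t) = 0"
      by (rule dir_zero[OF gradB]) (simp add: lossB matrix_vector_mult_diff_rdistrib Hx
           matrix_vector_mult_add_rdistrib sc)
    moreover have "inner Hm (outer (gB t *v x) x) = 0"
      by (simp add: inner_outer Hx)
    ultimately have "inner Hm Hm = 0" unfolding Hm_def by (simp add: inner_diff_right)
    thus ?thesis unfolding Hm_def by simp
  qed
  have inv: "\<exists>a b. A t = outer x a \<and> B t = outer b x" for t
  proof (induction t)
    case 0 thus ?case using A0 B0 by blast
  next
    case (Suc t)
    then obtain a b where ab: "A t = outer x a" "B t = outer b x" by blast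
    define h where "h = vmap \<phi> (B t *v x)"
    have "GDERIV (\<lambda>A'. loss \<phi> x A' (B t)) (A t) :> - outer (x - A t *v h) h"
      unfolding lossB h_def by (rule gradA_form)
    hence gA: "gA t = - outer (x - A t *v h) h" using gradA[of t] gderiv_unique by blast
    have "x - A t *v h = (1 - inner a h) *\<^sub>R x"
      by (simp add: ab outer_mv algebra_simps)
    hence "gA t = - outer ((1 - inner a h) *\<^sub>R x) h" using gA by simp
    also have "\<dots> = outer x (- (1 - inner a h) *\<^sub>R h)"
      by (simp add: outer_def vec_eq_iff algebra_simps)
    finally have "A (Suc t) = outer x (a - \<gamma> *\<^sub>R (- (1 - inner a h) *\<^sub>R h))"
      using stepA[of t] ab by (simp add: outer_diff1)
    moreover have "B (Suc t) = outer (b - \<gamma> *\<^sub>R (gB t *v x)) x"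
      using stepB[of t] ab gB_form[of t] by (metis outer_diff2)
    ultimately show ?case by blast
  qed
  have inf: "Ainf \<in> range (outer x) \<and> Binf \<in> range (\<lambda>b. outer b x)"
    using final
  proof
    assume "\<exists>T. Ainf = A T \<and> Binf = B T"
    thus ?thesis using inv by blast
  next
    assume lim: "A \<longlonglongrightarrow> Ainf \<and> B \<longlonglongrightarrow> Binf"
    have c1: "closed (range (outer x) :: (real^'k^'k0) set)"
      by (rule closed_subspace[OF subspace_outer1])
    have c2: "closed (range (\<lambda>b::real^'k. outer b x))"
      by (rule closed_subspace[OF subspace_outer2])
    have "\<forall>n. A n \<in> range (outer x)" "\<forall>n. B n \<in> range (\<lambda>b. outer b x)" using inv by blast+
    thus ?thesis using lim c1 c2 closed_sequentially by metis
  qed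
  then obtain a b where ab: "Ainf = outer x a" "Binf = outer b x" by blast
  have "norm (x - net \<phi> Ainf Binf x) = 0" using zero_err by (simp add: loss_def)
  hence "x = (inner a (vmap \<phi> b)) *\<^sub>R x"
    by (simp add: net_def ab outer_mv xx inner_commute)
  hence "(1 - inner a (vmap \<phi> b)) *\<^sub>R x = 0" by (simp add: algebra_simps)
  moreover have "x \<noteq> 0" using x_norm by auto
  ultimately have "inner a (vmap \<phi> b) = 1" by simp
  thus ?thesis using ab by blast
qed

end
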